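(* In any execution of $\mathcal{U}$, let $p$ be a process and suppose $H_p = (t, r)$ at time $T$ with $r \neq NULL$. Then for all times $T' \geq T$, if $H_p.time = t$ at $T'$ then $H_p.response = r$ at $T'$.
   Context: Model: an asynchronous shared-memory system with possibly infinitely many processes, any of which may crash, communicating via atomic shared objects. A fetch-and-increment (F\&I) object stores an integer; F\&I$(C)$ atomically returns the current value and increments it. A generalized-compare-and-swap (GCAS) object $O$ stores a value and supports Read$(O)$ and GCAS$(c, O, v_1, v_2)$, which atomically does: if $c(\text{current value of } O, v_1)$ holds then set $O := v_2$ and return true, else return false. Tuples are compared componentwise for $=$; GCAS$(>, A, (t,-,-), v)$ succeeds iff the time field of $A$ is strictly greater than $t$. Implemented type $\mathcal{T} = (OP, RES, Q, \delta)$ with initial state $s_0$; a procedure $apply_{\mathcal{T}}(o,s)$ returns some $(s',r)$ with $(s,o,s',r)\in\delta$. $NULL$ is a value different from every response of $\mathcal{T}$, and $NOOP$ is a name different from every operation of $\mathcal{T}$. Algorithm $\mathcal{U}$: each process $p$ owns a GCAS object $H_p$ with fields $(time, response)$. Shared objects: F\&I object $C$, initially $1$; GCAS object $A$ with fields $(time, op, ptr)$, initially $(0, NOOP, h(NOOP))$, where $h(NOOP)$ is a pointer to an immutable location containing $(0,\perp)$; GCAS object $S$ with fields $(time, state, response, ptr)$, initially $(0, s_0, \perp, h(NOOP))$. Process $p$ performs operation $o$ by calling DoOp$(o)$: (1) DoOp$(o)$ invoked; (2) $t := $ F\&I$(C)$; (3) $H_p := (t, NULL)$; (4) while $H_p =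 (t, NULL)$ do: (5) $(t^*, s^*, r^*, roptr^* ) := S$; (6) GCAS$(=, *roptr^*, (t^*, NULL), (t^*, r^* ))$; (7) GCAS$(>, A, (t,-,-), (t, o, \&H_p))$; (8) $(t', o', roptr') := A$; (9) $(\hat t, \hat r) := *roptr'$; (10) if $(\hat t,\hat r) = (t', NULL)$ then (11) $(s', r') := apply_{\mathcal{T}}(o', s^* )$; (12) GCAS$(=, S, (t^*,s^*,r^*,roptr^* ), (t', s', r', roptr'))$; (13) else GCAS$(=, A, (t', o', roptr'), (t, o, \&H_p))$; end while; (14) return $H_p.response$. *)

theory Defs
  imports Main
begin

text \<open>Processes have an arbitrary (possibly infinite) type 'p.
  Operations of the implemented type have type 'o, states 's, responses 'r;
  the sequential specification is the relation delta of tuples (s, o, s', r).\<close>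

datatype 'o opx = NOOP | Op 'o

text \<open>Values stored in response fields: NULL, the initial value bottom, or a response.\<close>
datatype 'r rv = Null | Bot | Resp 'r

text \<open>Pointers: h(NOOP) (immutable location holding (0,bottom)) or the address of H_q.\<close>
datatype 'p ptr = HNoop | HP 'p

datatype pcv = Idle | L2 | L3 | L4 | L5 | L6 | L7 | L8 | L9 | L10 | L11 | L12 | L13 | L14

record ('p, 'o, 's, 'r) loc =
  pc    :: pcv
  lop   :: 'o          \<comment> \<open>o\<close>
  lt    :: nat         \<comment> \<open>t\<close>
  ts    :: nat         \<comment> \<open>t*\<close>
  ss    :: 's          \<comment> \<open>s*\<close>
  rs    :: "'r rv"     \<comment> \<open>r*\<close>
  ps    :: "'p ptr"    \<comment> \<open>roptr*\<close>
  tp    :: nat         \<comment> \<open>t'\<close>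
  opp   :: "'o opx"    \<comment> \<open>o'\<close>
  pp    :: "'p ptr"    \<comment> \<open>roptr'\<close>
  th    :: nat         \<comment> \<open>t hat\<close>
  rh    :: "'r rv"     \<comment> \<open>r hat\<close>
  sn    :: 's          \<comment> \<open>s'\<close>
  rn    :: 'r          \<comment> \<open>r'\<close>

record ('p, 'o, 's, 'r) cfg =
  Cv  :: nat
  Av  :: "nat \<times> 'o opx \<times> 'p ptr"
  Sv  :: "nat \<times> 's \<times> 'r rv \<times> 'p ptr"
  H   :: "'p \<Rightarrow> nat \<times> 'r rv"
  L   :: "'p \<Rightarrow> ('p, 'o, 's, 'r) loc"

definition deref :: "('p \<Rightarrow> nat \<times> 'r rv) \<Rightarrow> 'p ptr \<Rightarrow> nat \<times> 'r rv" where
  "deref h x = (case x of HNoop \<Rightarrow> (0, Bot) | HP q \<Rightarrow> h q)"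

definition init_cfg :: "'s \<Rightarrow> ('p, 'o, 's, 'r) cfg \<Rightarrow> bool" where
  "init_cfg s0 c \<longleftrightarrow> Cv c = 1 \<and> Av c = (0, NOOP, HNoop) \<and> Sv c = (0, s0, Bot, HNoop)
     \<and> (\<forall>q. H c q = (0, Bot)) \<and> (\<forall>q. pc (L c q) = Idle)"

text \<open>One atomic step of process p (one numbered line of DoOp).\<close>
definition step :: "('s \<times> 'o \<times> 's \<times> 'r) set \<Rightarrow> 'p \<Rightarrow> ('p, 'o, 's, 'r) cfg \<Rightarrow> ('p, 'o, 's, 'r) cfg \<Rightarrow> bool" where
  "step \<delta> p c c' \<longleftrightarrow> (let l = L c p; setl = (\<lambda>c0 l'. c0\<lparr>L := (L c0)(p := l')\<rparr>) in
    case pc l of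
      Idle \<Rightarrow> (\<exists>oo. c' = setl c (l\<lparr>pc := L2, lop := oo\<rparr>))
    | L2 \<Rightarrow> c' = setl (c\<lparr>Cv := Cv c + 1\<rparr>) (l\<lparr>pc := L3, lt := Cv c\<rparr>)
    | L3 \<Rightarrow> c' = setl (c\<lparr>H := (H c)(p := (lt l, Null))\<rparr>) (l\<lparr>pc := L4\<rparr>)
    | L4 \<Rightarrow> c' = setl c (l\<lparr>pc := (if H c p = (lt l, Null) then L5 else L14)\<rparr>)
    | L5 \<Rightarrow> (case Sv c of (t1, s1, r1, p1) \<Rightarrow>
               c' = setl c (l\<lparr>pc := L6, ts := t1, ss := s1, rs := r1, ps := p1\<rparr>))
    | L6 \<Rightarrow> c' = setl (case ps l of
                         HNoop \<Rightarrow> c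
                       | HP q \<Rightarrow> (if H c q = (ts l, Null)
                                  then c\<lparr>H := (H c)(q := (ts l, rs l))\<rparr> else c))
                      (l\<lparr>pc := L7\<rparr>)
    | L7 \<Rightarrow> c' = setl (if fst (Av c) > lt l then c\<lparr>Av := (lt l, Op (lop l), HP p)\<rparr> else c)
                      (l\<lparr>pc := L8\<rparr>)
    | L8 \<Rightarrow> (case Av c of (t1, o1, p1) \<Rightarrow>
               c' = setl c (l\<lparr>pc := L9, tp := t1, opp := o1, pp := p1\<rparr>))
    | L9 \<Rightarrow> c' = setl c (l\<lparr>pc := L10, th := fst (deref (H c) (pp l)),
                                      rh := snd (deref (H c) (pp l))\<rparr>)
    | L10 \<Rightarrow> c' = setl c (l\<lparr>pc := (if (th l, rh l) = (tp l, Null) then L11 else L13)\<rparr>)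
    | L11 \<Rightarrow> (\<exists>o1 s1 r1. opp l = Op o1 \<and> (ss l, o1, s1, r1) \<in> \<delta> \<and>
               c' = setl c (l\<lparr>pc := L12, sn := s1, rn := r1\<rparr>))
    | L12 \<Rightarrow> c' = setl (if Sv c = (ts l, ss l, rs l, ps l)
                        then c\<lparr>Sv := (tp l, sn l, Resp (rn l), pp l)\<rparr> else c)
                       (l\<lparr>pc := L4\<rparr>)
    | L13 \<Rightarrow> c' = setl (if Av c = (tp l, opp l, pp l)
                        then c\<lparr>Av := (lt l, Op (lop l), HP p)\<rparr> else c)
                       (l\<lparr>pc := L4\<rparr>)
    | L14 \<Rightarrow> c' = setl c (l\<lparr>pc := Idle\<rparr>))"

text \<open>An execution: configuration at each time; each time step is either a step of
  some process or no change (so finite executions and crashes are included).\<close>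
definition execution :: "('s \<times> 'o \<times> 's \<times> 'r) set \<Rightarrow> 's \<Rightarrow> (nat \<Rightarrow> ('p, 'o, 's, 'r) cfg) \<Rightarrow> bool" where
  "execution \<delta> s0 E \<longleftrightarrow> init_cfg s0 (E 0) \<and>
     (\<forall>i. E (Suc i) = E i \<or> (\<exists>p. step \<delta> p (E i) (E (Suc i))))"

end

theory Submission
  imports Defs
begin

definition Inv :: "('p, 'o, 's, 'r) cfg \<Rightarrow> bool" where
  "Inv c \<longleftrightarrow> (\<forall>q. fst (H c q) < Cv c \<and> (pc (L c q) = L3 \<longrightarrow> fst (H c q) < lt (L c q))
     \<and> (pc (L c q) \<notin> {Idle, L2} \<longrightarrow> lt (L c q) < Cv c))"

lemma inv_step:
  assumes "step \<delta> q c c'" "Inv c" shows "Inv c'"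
  using assms
  apply (cases "pc (L c q)")
  apply (auto simp: step_def Let_def Inv_def split: prod.splits ptr.splits if_splits)
  apply (metis less_SucI fst_conv)+
  done

lemma mono_step:
  assumes "step \<delta> q c c'" "Inv c" "fst (H c p) \<ge> t"
    "fst (H c p) = t \<longrightarrow> snd (H c p) = r" "r \<noteq> Null"
  shows "fst (H c' p) \<ge> t \<and> (fst (H c' p) = t \<longrightarrow> snd (H c' p) = r)"
  using assms
  by (cases "pc (L c q)")
     (auto simp: step_def Let_def Inv_def split: prod.splits ptr.splits if_splits, (fastforce+)?)

theorem mainTheorem3:
  fixes \<delta> :: "('s \<times> 'o \<times> 's \<times> 'r) set" and s0 :: 's
    and E :: "nat \<Rightarrow> ('p, 'o, 's, 'r) cfg" and p :: 'p
  assumes total: "\<forall>s oo. \<exists>s' r. (s, oo, s', r) \<in> \<delta>"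
    and exec: "execution \<delta> s0 E"
    and HT: "H (E T) p = (t, r)" and notnull: "r \<noteq> Null"
    and le: "T \<le> T'"
    and time: "fst (H (E T') p) = t"
  shows "snd (H (E T') p) = r"
proof -
  have inv: "Inv (E i)" for i
  proof (induction i)
    case 0 thus ?case using exec by (simp add: execution_def init_cfg_def Inv_def)
  next
    case (Suc i) thus ?case using exec inv_step unfolding execution_def by metis
  qed
  have "fst (H (E (T + k)) p) \<ge> t \<and> (fst (H (E (T + k)) p) = t \<longrightarrow> snd (H (E (T + k)) p) = r)" for k
  proof (induction k)
    case 0 thus ?case using HT by simp
  next
    case (Suc k)
    have "E (Suc (T + k)) = E (T + k) \<or> (\<exists>q. step \<delta> q (E (T + k)) (E (Suc (T + k))))"
      using exec unfolding execution_def by blast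
    thus ?case using Suc mono_step[OF _ inv _ _ notnull] by auto
  qed
  from this[of "T' - T"] le time show ?thesis by simp
qed

end
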